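(* Let $G$ be a group endowed with an explicit solution to the conjugacy problem and with an algorithm which, for every $a\in G$, computes a finite generating set of the centralizer $C_G(a)$. Let $H<G$ be a subgroup satisfying Condition PC, witnessed by a triple $(K,K',\phi)$ where $\phi$ is computable, $K$ has a solution to the membership problem, and the finite subgroup $K'$ is given by the list of its elements. Then $H$ has an explicit solution to the conjugacy problem: there is an algorithm which, given $a,b\in H$, decides whether there exists $h'\in H$ with $b=(h')^{-1}ah'$ and, if so, outputs such an $h'$.
   Context: An explicit solution to the conjugacy problem in a group $G$ is an algorithm which, given $a,b\in G$, decides whether there is $c\in G$ with $a=c^{-1}bc$ and, if so, produces such a $c$. The centralizer $C_G(a)$ is the set of elements of $G$ commuting with $a$ (assumed finitely generated). A group $K$ has a solution to the membership problem if there is an algorithm which, given a finitely generated subgroup $L<K$ (by a finite generating set) and $g\in K$, decides whether $g\in L$. A subgroup $H<G$ satisfies Condition PC if there exist a group $K$, a subgroup $K'<K$ and a homomorphism $\phi:G\to K$ with $H=\phi^{-1}(K')$, such that $K$ has a solution to the membership problem and $K'$ is finite. *)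

theory Defs
  imports "HOL-Algebra.Algebra" "HOL-Library.Nat_Bijection"
begin

text \<open>Unary partial recursive functions on natural numbers, tuples being coded
by the Cantor pairing prod_encode.\<close>

datatype rf = Zero | Succ | Fst | Snd | Comp rf rf | Pair rf rf | Prim rf rf | Mn rf

inductive eval :: "rf \<Rightarrow> nat \<Rightarrow> nat \<Rightarrow> bool" where
  zero: "eval Zero x 0"
| succ: "eval Succ x (Suc x)"
| fst: "eval Fst x (fst (prod_decode x))"
| snd: "eval Snd x (snd (prod_decode x))"
| comp: "eval g x y \<Longrightarrow> eval f y z \<Longrightarrow> eval (Comp f g) x z"
| pair: "eval f x y \<Longrightarrow> eval g x z \<Longrightarrow> eval (Pair f g) x (prod_encode (y, z))"
| prim0: "eval f z y \<Longrightarrow> eval (Prim f g) (prod_encode (0, z)) y"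
| primS: "eval (Prim f g) (prod_encode (n, z)) r \<Longrightarrow>
           eval g (prod_encode (n, prod_encode (r, z))) y \<Longrightarrow>
           eval (Prim f g) (prod_encode (Suc n, z)) y"
| mn: "eval f (prod_encode (n, x)) 0 \<Longrightarrow>
        (\<forall>m<n. \<exists>v. v > 0 \<and> eval f (prod_encode (m, x)) v) \<Longrightarrow>
        eval (Mn f) x n"

definition computable :: "(nat \<Rightarrow> nat) \<Rightarrow> bool" where
  "computable F \<longleftrightarrow> (\<exists>p. \<forall>x. eval p x (F x))"

definition explicit_group :: "('a, 'm) monoid_scheme \<Rightarrow> (nat \<Rightarrow> 'a) \<Rightarrow> bool" where
  "explicit_group G \<nu> \<longleftrightarrow> group G \<and> range \<nu> = carrier G
     \<and> (\<exists>m. computable m \<and> (\<forall>x y. \<nu> (m (prod_encode (x, y))) = \<nu> x \<otimes>\<^bsub>G\<^esub> \<nu> y))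
     \<and> (\<exists>i. computable i \<and> (\<forall>x. \<nu> (i x) = inv\<^bsub>G\<^esub> \<nu> x))
     \<and> (\<exists>e. \<nu> e = \<one>\<^bsub>G\<^esub>)"

definition centralizer :: "('a, 'm) monoid_scheme \<Rightarrow> 'a \<Rightarrow> 'a set" where
  "centralizer G a = {g \<in> carrier G. g \<otimes>\<^bsub>G\<^esub> a = a \<otimes>\<^bsub>G\<^esub> g}"

definition explicit_conjugacy :: "('a, 'm) monoid_scheme \<Rightarrow> (nat \<Rightarrow> 'a) \<Rightarrow> bool" where
  "explicit_conjugacy G \<nu> \<longleftrightarrow> (\<exists>C. computable C \<and> (\<forall>a b.
      (C (prod_encode (a, b)) = 0 \<longleftrightarrow>
         \<not> (\<exists>c\<in>carrier G. \<nu> a = inv\<^bsub>G\<^esub> c \<otimes>\<^bsub>G\<^esub> \<nu> b \<otimes>\<^bsub>G\<^esub> c))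
    \<and> (\<forall>c'. C (prod_encode (a, b)) = Suc c' \<longrightarrow>
         \<nu> a = inv\<^bsub>G\<^esub> (\<nu> c') \<otimes>\<^bsub>G\<^esub> \<nu> b \<otimes>\<^bsub>G\<^esub> \<nu> c')))"

definition computable_centralizers :: "('a, 'm) monoid_scheme \<Rightarrow> (nat \<Rightarrow> 'a) \<Rightarrow> bool" where
  "computable_centralizers G \<nu> \<longleftrightarrow> (\<exists>Z. computable Z \<and> (\<forall>a.
      generate G (set (map \<nu> (list_decode (Z a)))) = centralizer G (\<nu> a)))"

definition membership_solvable :: "('a, 'm) monoid_scheme \<Rightarrow> (nat \<Rightarrow> 'a) \<Rightarrow> bool" where
  "membership_solvable K \<mu> \<longleftrightarrow> (\<exists>M. computable M \<and> (\<forall>ls g.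
      M (prod_encode (list_encode ls, g)) =
        (if \<mu> g \<in> generate K (set (map \<mu> ls)) then 1 else 0)))"

definition subgroup_explicit_conjugacy ::
    "('a, 'm) monoid_scheme \<Rightarrow> (nat \<Rightarrow> 'a) \<Rightarrow> 'a set \<Rightarrow> bool" where
  "subgroup_explicit_conjugacy G \<nu> H \<longleftrightarrow> (\<exists>p. \<forall>a b. \<nu> a \<in> H \<longrightarrow> \<nu> b \<in> H \<longrightarrow>
      (\<exists>r. eval p (prod_encode (a, b)) r
        \<and> (r = 0 \<longleftrightarrow> \<not> (\<exists>h\<in>H. \<nu> b = inv\<^bsub>G\<^esub> h \<otimes>\<^bsub>G\<^esub> \<nu> a \<otimes>\<^bsub>G\<^esub> h))
        \<and> (\<forall>h'. r = Suc h' \<longrightarrow> \<nu> h' \<in> H \<and> \<nu> b = inv\<^bsub>G\<^esub> (\<nu> h') \<otimes>\<^bsub>G\<^esub> \<nu> a \<otimes>\<^bsub>G\<^esub> \<nu> h')))"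

end

theory Submission
  imports Defs
begin


lemma c_comp: "computable f \<Longrightarrow> computable g \<Longrightarrow> computable (\<lambda>x. f (g x))"
  unfolding computable_def by (meson eval.comp)

lemma c_pair: "computable f \<Longrightarrow> computable g \<Longrightarrow> computable (\<lambda>x. prod_encode (f x, g x))"
  unfolding computable_def by (meson eval.pair)

lemma c_zero: "computable (\<lambda>x. 0)"
  unfolding computable_def by (meson eval.zero)

lemma c_succ: "computable Suc"
  unfolding computable_def by (meson eval.succ)

lemma c_fst: "computable (\<lambda>x. fst (prod_decode x))"
  unfolding computable_def by (meson eval.fst)

lemma c_snd: "computable (\<lambda>x. snd (prod_decode x))"
  unfolding computable_def by (meson eval.snd)

fun prec :: "(nat \<Rightarrow> nat) \<Rightarrow> (nat \<Rightarrow> nat) \<Rightarrow> nat \<Rightarrow> nat \<Rightarrow> nat" where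
  "prec f g 0 z = f z"
| "prec f g (Suc n) z = g (prod_encode (n, prod_encode (prec f g n z, z)))"

lemma c_prim:
  assumes "computable f" "computable g"
  shows "computable (\<lambda>x. prec f g (fst (prod_decode x)) (snd (prod_decode x)))"
proof -
  obtain pf pg where pf: "\<And>x. eval pf x (f x)" and pg: "\<And>x. eval pg x (g x)"
    using assms unfolding computable_def by blast
  have "eval (Prim pf pg) (prod_encode (n, z)) (prec f g n z)" for n z
    by (induction n) (auto intro: eval.prim0 eval.primS pf pg)
  then have "eval (Prim pf pg) x (prec f g (fst (prod_decode x)) (snd (prod_decode x)))" for x
    by (metis prod.collapse prod_decode_inverse)
  then show ?thesis unfolding computable_def by blast
qed

lemma c_id: "computable (\<lambda>x. x)"
proof -
  have "computable (\<lambda>x. prec (\<lambda>x. 0) (\<lambda>x. fst (prod_decode x)) (fst (prod_decode x)) (snd (prod_decode x)))"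
    by (rule c_prim[OF c_zero c_fst])
  then have "computable (\<lambda>x. prec (\<lambda>x. 0) (\<lambda>x. fst (prod_decode x))
      (fst (prod_decode (prod_encode (Suc x, 0)))) (snd (prod_decode (prod_encode (Suc x, 0)))))"
    by (rule c_comp) (rule c_pair[OF c_succ c_zero])
  then show ?thesis by simp
qed

lemma c_const: "computable (\<lambda>x. n)"
proof (induction n)
  case 0 then show ?case by (rule c_zero)
next
  case (Suc n) then show ?case using c_comp[OF c_succ] by blast
qed

lemma c_pred: "computable f \<Longrightarrow> computable (\<lambda>x. f x - 1)"
proof -
  assume f: "computable f"
  have "computable (\<lambda>x. prec (\<lambda>x. 0) (\<lambda>x. fst (prod_decode x)) (fst (prod_decode x)) (snd (prod_decode x)))"
    by (rule c_prim[OF c_zero c_fst])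
  then have "computable (\<lambda>x. prec (\<lambda>x. 0) (\<lambda>x. fst (prod_decode x))
      (fst (prod_decode (prod_encode (f x, 0)))) (snd (prod_decode (prod_encode (f x, 0)))))"
    by (rule c_comp) (rule c_pair[OF f c_zero])
  moreover have "prec (\<lambda>x. 0) (\<lambda>x. fst (prod_decode x)) n 0 = n - 1" for n
    by (cases n) auto
  ultimately show ?thesis by simp
qed

lemma c_if:
  assumes f: "computable f" and g: "computable g" and h: "computable h"
  shows "computable (\<lambda>x. if f x = 0 then g x else h x)"
proof -
  let ?b = "\<lambda>x. fst (prod_decode x)"
  let ?s = "\<lambda>x. snd (prod_decode (snd (prod_decode (snd (prod_decode x)))))"
  have s: "computable ?s" by (intro c_comp[OF c_snd] c_snd)
  have "computable (\<lambda>x. prec ?b ?s (fst (prod_decode x)) (snd (prod_decode x)))"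
    by (rule c_prim[OF c_fst s])
  then have "computable (\<lambda>x. prec ?b ?s
      (fst (prod_decode (prod_encode (f x, prod_encode (g x, h x)))))
      (snd (prod_decode (prod_encode (f x, prod_encode (g x, h x))))))"
    by (rule c_comp) (intro c_pair f g h)
  moreover have "prec ?b ?s n (prod_encode (a, b)) = (if n = 0 then a else b)" for n a b
    by (cases n) auto
  ultimately show ?thesis by simp
qed

lemma c_iter:
  assumes s: "computable s"
  shows "computable (\<lambda>x. (s ^^ fst (prod_decode x)) (snd (prod_decode x)))"
proof -
  let ?g = "\<lambda>w. s (fst (prod_decode (snd (prod_decode w))))"
  have "computable ?g" by (intro c_comp[OF s] c_comp[OF c_fst] c_snd)
  then have "computable (\<lambda>x. prec (\<lambda>x. x) ?g (fst (prod_decode x)) (snd (prod_decode x)))"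
    by (rule c_prim[OF c_id])
  moreover have "prec (\<lambda>x. x) ?g n z = (s ^^ n) z" for n z
    by (induction n) auto
  ultimately show ?thesis by simp
qed

lemma c_mn:
  assumes f: "computable f" and ex: "\<And>x. \<exists>n. f (prod_encode (n, x)) = 0"
  shows "computable (\<lambda>x. LEAST n. f (prod_encode (n, x)) = 0)"
proof -
  obtain p where p: "\<And>x. eval p x (f x)" using f unfolding computable_def by blast
  have "eval (Mn p) x (LEAST n. f (prod_encode (n, x)) = 0)" for x
  proof (rule eval.mn)
    show "eval p (prod_encode (LEAST n. f (prod_encode (n, x)) = 0, x)) 0"
      using p[of "prod_encode (LEAST n. f (prod_encode (n, x)) = 0, x)"] LeastI_ex[OF ex[of x]]
      by simp
    show "\<forall>m<(LEAST n. f (prod_encode (n, x)) = 0). \<exists>v>0. eval p (prod_encode (m, x)) v"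
      using p not_less_Least by blast
  qed
  then show ?thesis unfolding computable_def by blast
qed

lemma c_fstc: "computable f \<Longrightarrow> computable (\<lambda>x. fst (prod_decode (f x)))"
  by (rule c_comp[OF c_fst])
lemma c_sndc: "computable f \<Longrightarrow> computable (\<lambda>x. snd (prod_decode (f x)))"
  by (rule c_comp[OF c_snd])
lemma c_Succ: "computable f \<Longrightarrow> computable (\<lambda>x. Suc (f x))"
  by (rule c_comp[OF c_succ])

lemma c_exists:
  assumes "\<And>k. computable (t k)"
  shows "computable (\<lambda>x. if \<exists>k\<in>set ks. t k x \<noteq> 0 then 0 else 1)"
proof (induction ks)
  case Nil then show ?case using c_const[of 1] by simp
next
  case (Cons k ks)
  have "computable (\<lambda>x. if t k x = 0 then (if \<exists>k\<in>set ks. t k x \<noteq> 0 then 0 else 1) else 0)"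
    by (rule c_if[OF assms Cons c_zero])
  moreover have "(\<lambda>x. if t k x = 0 then (if \<exists>k\<in>set ks. t k x \<noteq> 0 then 0 else 1) else 0)
     = (\<lambda>x. if \<exists>k'\<in>set (k # ks). t k' x \<noteq> 0 then 0 else (1::nat))"
    by auto
  ultimately show ?case by simp
qed

lemma length_le_list_encode: "length xs \<le> list_encode xs"
proof (induction xs)
  case (Cons x xs)
  then show ?case using le_prod_encode_2[of "list_encode xs" x] by simp
qed simp

lemma (in group) conj_l1:
  assumes "a \<in> carrier G" "c \<in> carrier G" "z \<in> carrier G" "z \<otimes> a = a \<otimes> z"
  shows "inv (z \<otimes> c) \<otimes> a \<otimes> (z \<otimes> c) = inv c \<otimes> a \<otimes> c"
proof -
  have e: "inv z \<otimes> a \<otimes> z = a"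
  proof -
    have "inv z \<otimes> a \<otimes> z = inv z \<otimes> (a \<otimes> z)" using assms by (simp add: m_assoc)
    also have "\<dots> = inv z \<otimes> (z \<otimes> a)" using assms by simp
    also have "\<dots> = (inv z \<otimes> z) \<otimes> a" using assms(1-3) by (simp add: m_assoc[symmetric])
    finally show ?thesis using assms(1-3) by simp
  qed
  have "inv (z \<otimes> c) \<otimes> a \<otimes> (z \<otimes> c) = inv c \<otimes> (inv z \<otimes> a \<otimes> z) \<otimes> c"
    using assms by (simp add: inv_mult_group m_assoc)
  then show ?thesis using e by simp
qed

lemma (in group) conj_l2:
  assumes "a \<in> carrier G" "c \<in> carrier G" "h \<in> carrier G"
    "inv c \<otimes> a \<otimes> c = inv h \<otimes> a \<otimes> h"
  shows "(h \<otimes> inv c) \<otimes> a = a \<otimes> (h \<otimes> inv c)"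
proof -
  have "h \<otimes> (inv c \<otimes> a \<otimes> c) \<otimes> inv c = h \<otimes> (inv h \<otimes> a \<otimes> h) \<otimes> inv c"
    using assms by simp
  moreover have "h \<otimes> (inv c \<otimes> a \<otimes> c) \<otimes> inv c = h \<otimes> inv c \<otimes> a \<otimes> (c \<otimes> inv c)"
    using assms(1-3) by (simp add: m_assoc)
  moreover have "h \<otimes> (inv h \<otimes> a \<otimes> h) \<otimes> inv c = (h \<otimes> inv h) \<otimes> a \<otimes> (h \<otimes> inv c)"
    using assms(1-3) by (simp add: m_assoc[symmetric])
  ultimately show ?thesis using assms(1-3) by (simp add: m_assoc)
qed



lemma c_iter2:
  assumes "computable s" "computable g" "computable h"
  shows "computable (\<lambda>x. (s ^^ g x) (h x))"
  using c_comp[OF c_iter[OF assms(1)] c_pair[OF assms(2,3)]] by simp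

lemma (in group) mult_inv_one_iff:
  assumes "x \<in> carrier G" "y \<in> carrier G"
  shows "(x \<otimes> inv y = \<one>) = (x = y)"
  using assms by (metis inv_closed l_inv m_assoc r_one l_one r_inv)

lemma stp_iter:
  fixes fp :: "nat \<Rightarrow> nat"
  assumes stp: "\<And>w. stp w = (if fst (prod_decode w) = 0 then w else
      prod_encode (snd (prod_decode (fst (prod_decode w) - 1)),
        Suc (prod_encode (fp (fst (prod_decode (fst (prod_decode w) - 1))), snd (prod_decode w)))))"
  shows "length xs \<le> n \<Longrightarrow> (stp ^^ n) (prod_encode (list_encode xs, list_encode acc))
     = prod_encode (0, list_encode (rev (map fp xs) @ acc))"
proof (induction xs arbitrary: n acc)
  case Nil
  have "(stp ^^ m) (prod_encode (0, y)) = prod_encode (0, y)" for m y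
    by (induction m) (simp_all add: stp)
  then show ?case by simp
next
  case (Cons x xs)
  then obtain m where m: "n = Suc m" "length xs \<le> m" by (cases n) auto
  have "(stp ^^ n) (prod_encode (list_encode (x # xs), list_encode acc))
      = (stp ^^ m) (stp (prod_encode (list_encode (x # xs), list_encode acc)))"
    by (simp add: m funpow_Suc_right del: funpow.simps)
  also have "stp (prod_encode (list_encode (x # xs), list_encode acc))
      = prod_encode (list_encode xs, list_encode (fp x # acc))"
    by (simp add: stp)
  also have "(stp ^^ m) \<dots> = prod_encode (0, list_encode (rev (map fp xs) @ (fp x # acc)))"
    using Cons.IH m(2) by blast
  finally show ?case by simp
qed

theorem mainTheorem4:
  fixes G :: "('a, 'm) monoid_scheme" and \<nu> :: "nat \<Rightarrow> 'a"
    and K :: "('b, 'n) monoid_scheme" and \<mu> :: "nat \<Rightarrow> 'b"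
    and \<phi> :: "'a \<Rightarrow> 'b" and K' :: "'b set" and H :: "'a set"
    and ks :: "nat list"
  assumes G: "explicit_group G \<nu>"
    and conjG: "explicit_conjugacy G \<nu>"
    and centG: "computable_centralizers G \<nu>"
    and K: "explicit_group K \<mu>"
    and memK: "membership_solvable K \<mu>"
    and hom: "\<phi> \<in> hom G K"
    and phi_comp: "\<exists>f. computable f \<and> (\<forall>x. \<mu> (f x) = \<phi> (\<nu> x))"
    and K'_sub: "subgroup K' K"
    and K'_list: "set (map \<mu> ks) = K'"
    and H_def: "H = {g \<in> carrier G. \<phi> g \<in> K'}"
  shows "subgroup_explicit_conjugacy G \<nu> H"
proof -
  obtain mG iG eG where grpG: "group G" and rG: "range \<nu> = carrier G"
    and cmG: "computable mG" and mG: "\<And>x y. \<nu> (mG (prod_encode (x, y))) = \<nu> x \<otimes>\<^bsub>G\<^esub> \<nu> y"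
    and ciG: "computable iG" and iG: "\<And>x. \<nu> (iG x) = inv\<^bsub>G\<^esub> \<nu> x"
    and eG: "\<nu> eG = \<one>\<^bsub>G\<^esub>"
    using G unfolding explicit_group_def by blast
  obtain mK iK where grpK: "group K" and rK: "range \<mu> = carrier K"
    and cmK: "computable mK" and mK: "\<And>x y. \<mu> (mK (prod_encode (x, y))) = \<mu> x \<otimes>\<^bsub>K\<^esub> \<mu> y"
    and ciK: "computable iK" and iK: "\<And>x. \<mu> (iK x) = inv\<^bsub>K\<^esub> \<mu> x"
    using K unfolding explicit_group_def by blast
  obtain C where cC: "computable C" and C0: "\<And>a b. C (prod_encode (a, b)) = 0 \<longleftrightarrow>
         \<not> (\<exists>c\<in>carrier G. \<nu> a = inv\<^bsub>G\<^esub> c \<otimes>\<^bsub>G\<^esub> \<nu> b \<otimes>\<^bsub>G\<^esub> c)"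
    and CS: "\<And>a b c'. C (prod_encode (a, b)) = Suc c' \<Longrightarrow>
         \<nu> a = inv\<^bsub>G\<^esub> (\<nu> c') \<otimes>\<^bsub>G\<^esub> \<nu> b \<otimes>\<^bsub>G\<^esub> \<nu> c'"
    using conjG unfolding explicit_conjugacy_def by blast
  obtain Z where cZ: "computable Z" and Z: "\<And>a.
      generate G (set (map \<nu> (list_decode (Z a)))) = centralizer G (\<nu> a)"
    using centG unfolding computable_centralizers_def by blast
  obtain M where cM: "computable M" and M: "\<And>ls g.
      M (prod_encode (list_encode ls, g)) =
        (if \<mu> g \<in> generate K (set (map \<mu> ls)) then 1 else 0)"
    using memK unfolding membership_solvable_def by blast
  obtain fp where cfp: "computable fp" and fp: "\<And>x. \<mu> (fp x) = \<phi> (\<nu> x)"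
    using phi_comp by blast
  interpret G: group G by (rule grpG)
  interpret K: group K by (rule grpK)
  interpret phi: group_hom G K \<phi> using hom grpG grpK by (simp add: group_hom_def group_hom_axioms_def)
  have nu: "\<nu> x \<in> carrier G" for x using rG by blast
  have mu: "\<mu> x \<in> carrier K" for x using rK by blast

  have eqG: "C (prod_encode (mG (prod_encode (x, iG y)), eG)) = 0 \<longleftrightarrow> \<nu> x \<noteq> \<nu> y" for x y
  proof -
    have "C (prod_encode (mG (prod_encode (x, iG y)), eG)) = 0 \<longleftrightarrow> \<nu> x \<otimes>\<^bsub>G\<^esub> inv\<^bsub>G\<^esub> \<nu> y \<noteq> \<one>\<^bsub>G\<^esub>"
      unfolding C0 mG iG eG by (auto simp: nu)
    then show ?thesis using G.mult_inv_one_iff[OF nu nu] by simp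
  qed
  have genK': "generate K K' = K'"
    using K.generate_subgroup_incl[OF _ K'_sub] generate.incl[of _ K' K] by blast
  have inH: "M (prod_encode (list_encode ks, fp n)) = (if \<nu> n \<in> H then 1 else 0)" for n
    unfolding M K'_list genK' fp H_def using nu by simp

  define T where "T w = (if M (prod_encode (list_encode ks, fp (fst (prod_decode w)))) = 0 then 1
     else if C (prod_encode (mG (prod_encode (snd (prod_decode (snd (prod_decode w))),
        iG (mG (prod_encode (mG (prod_encode (iG (fst (prod_decode w)), fst (prod_decode (snd (prod_decode w))))),
            fst (prod_decode w)))))), eG)) = 0 then 1 else (0::nat))" for w
  have T: "T (prod_encode (n, prod_encode (a, b))) = 0 \<longleftrightarrow>
     \<nu> n \<in> H \<and> \<nu> b = inv\<^bsub>G\<^esub> \<nu> n \<otimes>\<^bsub>G\<^esub> \<nu> a \<otimes>\<^bsub>G\<^esub> \<nu> n" for n a b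
    unfolding T_def using eqG inH by (simp add: mG iG)

  define stp where "stp w = (if fst (prod_decode w) = 0 then w else
      prod_encode (snd (prod_decode (fst (prod_decode w) - 1)),
        Suc (prod_encode (fp (fst (prod_decode (fst (prod_decode w) - 1))), snd (prod_decode w)))))" for w
  define L where "L a = snd (prod_decode ((stp ^^ Z a) (prod_encode (Z a, 0))))" for a
  have L: "L a = list_encode (rev (map fp (list_decode (Z a))))" for a
  proof -
    have "(stp ^^ Z a) (prod_encode (list_encode (list_decode (Z a)), list_encode []))
       = prod_encode (0, list_encode (rev (map fp (list_decode (Z a))) @ []))"
      by (rule stp_iter[OF stp_def]) (metis length_le_list_encode list_decode_inverse)
    then show ?thesis unfolding L_def by simp
  qed
  have genL: "generate K (set (map \<mu> (list_decode (L a)))) = \<phi> ` centralizer G (\<nu> a)" for a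
  proof -
    have "set (map \<mu> (list_decode (L a))) = \<phi> ` set (map \<nu> (list_decode (Z a)))"
      unfolding L by (force simp: fp image_image)
    moreover have "set (map \<nu> (list_decode (Z a))) \<subseteq> carrier G" using nu by auto
    ultimately show ?thesis using phi.generate_img[of "set (map \<nu> (list_decode (Z a)))"] Z by simp
  qed
  define tst where "tst k x = M (prod_encode (L (fst (prod_decode x)),
       mK (prod_encode (k, iK (fp (C (prod_encode (snd (prod_decode x), fst (prod_decode x))) - 1))))))" for k x
  define D where "D x = (if C (prod_encode (snd (prod_decode x), fst (prod_decode x))) = 0 then 1
       else (if \<exists>k\<in>set ks. tst k x \<noteq> 0 then 0 else (1::nat)))" for x
  have D: "D (prod_encode (a, b)) = 0 \<longleftrightarrow> (\<exists>h\<in>H. \<nu> b = inv\<^bsub>G\<^esub> h \<otimes>\<^bsub>G\<^esub> \<nu> a \<otimes>\<^bsub>G\<^esub> h)" for a b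
  proof
    assume "D (prod_encode (a, b)) = 0"
    note D0 = this
    have nz: "C (prod_encode (b, a)) \<noteq> 0" using D0 unfolding D_def by (auto split: if_splits)
    then obtain c' where c': "C (prod_encode (b, a)) = Suc c'" using not0_implies_Suc by blast
    have "\<exists>k\<in>set ks. tst k (prod_encode (a, b)) \<noteq> 0" using D0 nz unfolding D_def by (auto split: if_splits)
    then obtain k where k: "k \<in> set ks" and tk: "tst k (prod_encode (a, b)) \<noteq> 0" by blast
    have bc: "\<nu> b = inv\<^bsub>G\<^esub> (\<nu> c') \<otimes>\<^bsub>G\<^esub> \<nu> a \<otimes>\<^bsub>G\<^esub> \<nu> c'" using CS[OF c'] .
    have "\<mu> k \<otimes>\<^bsub>K\<^esub> inv\<^bsub>K\<^esub> \<phi> (\<nu> c') \<in> \<phi> ` centralizer G (\<nu> a)"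
      using tk M[of "list_decode (L a)"] unfolding tst_def genL
      by (simp add: c' mK iK fp split: if_splits)
    then obtain z where z: "z \<in> centralizer G (\<nu> a)" and pz: "\<phi> z = \<mu> k \<otimes>\<^bsub>K\<^esub> inv\<^bsub>K\<^esub> \<phi> (\<nu> c')"
      by auto
    have zc: "z \<in> carrier G" "z \<otimes>\<^bsub>G\<^esub> \<nu> a = \<nu> a \<otimes>\<^bsub>G\<^esub> z" using z unfolding centralizer_def by auto
    have "\<phi> (z \<otimes>\<^bsub>G\<^esub> \<nu> c') = \<mu> k"
      using zc nu mu pz by (simp add: K.m_assoc)
    then have "z \<otimes>\<^bsub>G\<^esub> \<nu> c' \<in> H" using k K'_list zc nu unfolding H_def by auto
    moreover have "\<nu> b = inv\<^bsub>G\<^esub> (z \<otimes>\<^bsub>G\<^esub> \<nu> c') \<otimes>\<^bsub>G\<^esub> \<nu> a \<otimes>\<^bsub>G\<^esub> (z \<otimes>\<^bsub>G\<^esub> \<nu> c')"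
      using G.conj_l1[OF nu nu zc] bc by simp
    ultimately show "\<exists>h\<in>H. \<nu> b = inv\<^bsub>G\<^esub> h \<otimes>\<^bsub>G\<^esub> \<nu> a \<otimes>\<^bsub>G\<^esub> h" by blast
  next
    assume "\<exists>h\<in>H. \<nu> b = inv\<^bsub>G\<^esub> h \<otimes>\<^bsub>G\<^esub> \<nu> a \<otimes>\<^bsub>G\<^esub> h"
    then obtain h where hH: "h \<in> H" and hb: "\<nu> b = inv\<^bsub>G\<^esub> h \<otimes>\<^bsub>G\<^esub> \<nu> a \<otimes>\<^bsub>G\<^esub> h" by blast
    have hc: "h \<in> carrier G" "\<phi> h \<in> K'" using hH H_def by auto
    have "C (prod_encode (b, a)) \<noteq> 0" using C0 hb hc by blast
    then obtain c' where c': "C (prod_encode (b, a)) = Suc c'" using not0_implies_Suc by blast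
    have bc: "\<nu> b = inv\<^bsub>G\<^esub> (\<nu> c') \<otimes>\<^bsub>G\<^esub> \<nu> a \<otimes>\<^bsub>G\<^esub> \<nu> c'" using CS[OF c'] .
    obtain k where k: "k \<in> set ks" "\<mu> k = \<phi> h" using hc K'_list by auto
    have zc: "(h \<otimes>\<^bsub>G\<^esub> inv\<^bsub>G\<^esub> \<nu> c') \<otimes>\<^bsub>G\<^esub> \<nu> a = \<nu> a \<otimes>\<^bsub>G\<^esub> (h \<otimes>\<^bsub>G\<^esub> inv\<^bsub>G\<^esub> \<nu> c')"
      using G.conj_l2[OF nu nu hc(1)] bc hb by simp
    then have "h \<otimes>\<^bsub>G\<^esub> inv\<^bsub>G\<^esub> \<nu> c' \<in> centralizer G (\<nu> a)"
      unfolding centralizer_def using hc nu by simp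
    moreover have "\<phi> (h \<otimes>\<^bsub>G\<^esub> inv\<^bsub>G\<^esub> \<nu> c') = \<mu> k \<otimes>\<^bsub>K\<^esub> inv\<^bsub>K\<^esub> \<phi> (\<nu> c')"
      using hc nu k by simp
    ultimately have "\<mu> k \<otimes>\<^bsub>K\<^esub> inv\<^bsub>K\<^esub> \<phi> (\<nu> c') \<in> \<phi> ` centralizer G (\<nu> a)" by force
    then have "tst k (prod_encode (a, b)) \<noteq> 0"
      using M[of "list_decode (L a)"] unfolding tst_def genL
      by (simp add: c' mK iK fp)
    then show "D (prod_encode (a, b)) = 0" unfolding D_def using k c' by auto
  qed

  define T' where "T' w = (if D (snd (prod_decode w)) = 0 then T w else 0)" for w
  define F where "F x = (if D x = 0 then Suc (LEAST n. T' (prod_encode (n, x)) = 0) else 0)" for x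
  have ex: "\<exists>n. T' (prod_encode (n, x)) = 0" for x
  proof (cases "D x = 0")
    case True
    obtain a b where x: "x = prod_encode (a, b)" by (metis prod_decode_inverse prod.collapse)
    then obtain h where "h \<in> H" "\<nu> b = inv\<^bsub>G\<^esub> h \<otimes>\<^bsub>G\<^esub> \<nu> a \<otimes>\<^bsub>G\<^esub> h" using True D by blast
    moreover obtain n where "h = \<nu> n" using rG H_def \<open>h \<in> H\<close> by (metis (no_types, lifting) mem_Collect_eq rangeE)
    ultimately have "T (prod_encode (n, x)) = 0" using T x by simp
    then show ?thesis using True unfolding T'_def by auto
  next
    case False
    then show ?thesis unfolding T'_def by auto
  qed
  note R = c_if c_pair c_fstc c_sndc c_Succ c_pred c_id c_const c_comp[OF cC] c_comp[OF cM]
    c_comp[OF cmG] c_comp[OF ciG] c_comp[OF cmK] c_comp[OF ciK] c_comp[OF cfp] c_comp[OF cZ]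
  have cstp: "computable stp" unfolding stp_def[abs_def] by (intro R)
  have cL: "computable L" unfolding L_def[abs_def] by (intro R c_iter2 cstp)
  have ctst: "computable (tst k)" for k unfolding tst_def[abs_def] by (intro R c_comp[OF cL])
  have cD: "computable D" unfolding D_def[abs_def] by (intro R c_exists ctst)
  have cT: "computable T" unfolding T_def[abs_def] by (intro R)
  have cT': "computable T'" unfolding T'_def[abs_def] by (intro R c_comp[OF cD] cT)
  have cF: "computable F" unfolding F_def[abs_def]
    by (rule c_if[OF cD c_Succ[OF c_mn[OF cT' ex]] c_zero])
  then obtain p where p: "\<And>x. eval p x (F x)" unfolding computable_def by blast
  show ?thesis unfolding subgroup_explicit_conjugacy_def
  proof (rule exI[of _ p], intro allI impI)
    fix a b
    let ?x = "prod_encode (a, b)"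
    show "\<exists>r. eval p (prod_encode (a, b)) r \<and>
          (r = 0) = (\<not> (\<exists>h\<in>H. \<nu> b = inv\<^bsub>G\<^esub> h \<otimes>\<^bsub>G\<^esub> \<nu> a \<otimes>\<^bsub>G\<^esub> h)) \<and>
          (\<forall>h'. r = Suc h' \<longrightarrow> \<nu> h' \<in> H \<and> \<nu> b = inv\<^bsub>G\<^esub> \<nu> h' \<otimes>\<^bsub>G\<^esub> \<nu> a \<otimes>\<^bsub>G\<^esub> \<nu> h')"
    proof (intro exI conjI allI impI)
      show "eval p ?x (F ?x)" by (rule p)
      show "(F ?x = 0) = (\<not> (\<exists>h\<in>H. \<nu> b = inv\<^bsub>G\<^esub> h \<otimes>\<^bsub>G\<^esub> \<nu> a \<otimes>\<^bsub>G\<^esub> h))"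
        using D[of a b] unfolding F_def by auto
      fix h' assume h': "F ?x = Suc h'"
      then have D0: "D ?x = 0" and hl: "h' = (LEAST n. T' (prod_encode (n, ?x)) = 0)"
        unfolding F_def by (auto split: if_splits)
      have "T' (prod_encode (h', ?x)) = 0" unfolding hl by (rule LeastI_ex[OF ex])
      then have "T (prod_encode (h', ?x)) = 0" using D0 unfolding T'_def by simp
      then show "\<nu> h' \<in> H" "\<nu> b = inv\<^bsub>G\<^esub> \<nu> h' \<otimes>\<^bsub>G\<^esub> \<nu> a \<otimes>\<^bsub>G\<^esub> \<nu> h'"
        using T by auto
    qed
  qed
qed
end
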